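(* Let $T\in\mathcal{L}(\mathcal{H})$ be a contraction with $\dim\mathcal{D}_T=\dim\mathcal{D}_{T^*}=N<\infty$, and let $V\in\mathcal{L}(\mathcal{H}')$ be unitary; put $T_1=T\oplus V$ on $\mathcal{H}\oplus\mathcal{H}'$. Suppose that the map $\tau:\mathcal{U}_T\to\mathfrak{K}$, $\mathbf{U}\mapsto\overline{W(\mathbf{U})}$, wraps $\overline{W(T)}$, where $\mathcal{U}_T$ is the set of unitary $N$-dilations of $T$ to $\mathcal{H}\oplus\mathbb{C}^N$. Then the analogous map $\tau_1:\mathcal{U}_{T_1}\to\mathfrak{K}$, $\mathbf{U}\mapsto\overline{W(\mathbf{U})}$, wraps $\overline{W(T_1)}$, where $\mathcal{U}_{T_1}$ is the set of unitary $N$-dilations of $T_1$ to $\mathcal{H}\oplus\mathcal{H}'\oplus\mathbb{C}^N$.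
   Context: For a contraction $T$, $\mathcal{D}_T=\overline{\operatorname{ran}(I-T^*T)^{1/2}}$ and $\mathcal{D}_{T^*}=\overline{\operatorname{ran}(I-TT^* )^{1/2}}$. A unitary $N$-dilation of $T\in\mathcal{L}(\mathcal{H})$ to $\mathcal{H}\oplus\mathbb{C}^N$ is a unitary $\mathbf{U}$ on $\mathcal{H}\oplus\mathbb{C}^N$ with $P_{\mathcal{H}}\mathbf{U}|_{\mathcal{H}}=T$. $W$ denotes numerical range. $\mathfrak{K}$ is the space of nonempty compact subsets of $\mathbb{C}$ with the Hausdorff distance; a map $\tau$ from a set $Y$ to $\mathfrak{K}$ wraps $A\in\mathfrak{K}$ if for every open half-plane $\mathbb{H}$ containing $A$ there exists $y\in Y$ with $\tau(y)\subset\mathbb{H}$. *)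

theory Defs
  imports "HOL-Analysis.Analysis"
begin

text \<open>A complex Hilbert space is encoded as a real Hilbert space (real inner product
space that is complete) equipped with an orthogonal complex structure \<open>iunit\<close>
(multiplication by the imaginary unit).  Complex scalar multiplication and the
complex inner product (linear in the first argument) are derived from it.\<close>

class chilbert = real_inner + complete_space +
  fixes iunit :: "'a \<Rightarrow> 'a"
  assumes iunit_add: "iunit (x + y) = iunit x + iunit y"
    and iunit_scaleR: "iunit (r *\<^sub>R x) = r *\<^sub>R iunit x"
    and iunit_iunit: "iunit (iunit x) = - x"
    and inner_iunit: "inner (iunit x) (iunit y) = inner x y"

instantiation complex :: chilbert
begin
definition iunit_complex :: "complex \<Rightarrow> complex" where "iunit_complex z = \<i> * z"
instance
  by standard (auto simp: iunit_complex_def inner_complex_def algebra_simps complex_eq_iff)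
end

instantiation prod :: (chilbert, chilbert) chilbert
begin
definition iunit_prod :: "'a \<times> 'b \<Rightarrow> 'a \<times> 'b" where
  "iunit_prod p = (iunit (fst p), iunit (snd p))"
instance
  by standard (auto simp: iunit_prod_def iunit_iunit inner_iunit inner_prod_def iunit_add iunit_scaleR)
end

instantiation vec :: (chilbert, finite) chilbert
begin
definition iunit_vec :: "'a ^ 'b \<Rightarrow> 'a ^ 'b" where
  "iunit_vec v = (\<chi> i. iunit (v $ i))"
instance
  by standard (auto simp: iunit_vec_def iunit_iunit inner_iunit inner_vec_def vec_eq_iff iunit_add iunit_scaleR)
end

definition scaleC :: "complex \<Rightarrow> 'a::chilbert \<Rightarrow> 'a" where
  "scaleC c x = Re c *\<^sub>R x + Im c *\<^sub>R iunit x"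

definition cinner :: "'a::chilbert \<Rightarrow> 'a \<Rightarrow> complex" where
  "cinner x y = Complex (inner x y) (inner x (iunit y))"

definition bounded_clinear_op :: "('a::chilbert \<Rightarrow> 'b::chilbert) \<Rightarrow> bool" where
  "bounded_clinear_op T \<longleftrightarrow> bounded_linear T \<and> (\<forall>x. T (iunit x) = iunit (T x))"

definition cadjoint :: "('a::chilbert \<Rightarrow> 'b::chilbert) \<Rightarrow> ('b \<Rightarrow> 'a)" where
  "cadjoint T = (THE S. \<forall>x y. cinner (T x) y = cinner x (S y))"

definition contraction :: "('a::chilbert \<Rightarrow> 'a) \<Rightarrow> bool" where
  "contraction T \<longleftrightarrow> bounded_clinear_op T \<and> (\<forall>x. norm (T x) \<le> norm x)"

definition unitary_op :: "('a::chilbert \<Rightarrow> 'a) \<Rightarrow> bool" where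
  "unitary_op U \<longleftrightarrow> bounded_clinear_op U \<and> U \<circ> cadjoint U = id \<and> cadjoint U \<circ> U = id"

definition positive_op :: "('a::chilbert \<Rightarrow> 'a) \<Rightarrow> bool" where
  "positive_op A \<longleftrightarrow> bounded_clinear_op A \<and> (\<forall>x. cinner (A x) x \<in> \<real> \<and> 0 \<le> Re (cinner (A x) x))"

definition op_sqrt :: "('a::chilbert \<Rightarrow> 'a) \<Rightarrow> ('a \<Rightarrow> 'a)" where
  "op_sqrt A = (THE S. positive_op S \<and> S \<circ> S = A)"

definition defect_space :: "('a::chilbert \<Rightarrow> 'a) \<Rightarrow> 'a set" where
  "defect_space T = closure (range (op_sqrt (\<lambda>x. x - cadjoint T (T x))))"

definition defect_space_adj :: "('a::chilbert \<Rightarrow> 'a) \<Rightarrow> 'a set" where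
  "defect_space_adj T = closure (range (op_sqrt (\<lambda>x. x - T (cadjoint T x))))"

definition cindependent :: "'a::chilbert set \<Rightarrow> bool" where
  "cindependent B \<longleftrightarrow> (\<forall>F c. finite F \<and> F \<subseteq> B \<and> (\<Sum>b\<in>F. scaleC (c b) b) = 0 \<longrightarrow> (\<forall>b\<in>F. c b = 0))"

definition cspan :: "'a::chilbert set \<Rightarrow> 'a set" where
  "cspan B = {\<Sum>b\<in>F. scaleC (c b) b | F c. finite F \<and> F \<subseteq> B}"

definition has_cdim :: "'a::chilbert set \<Rightarrow> nat \<Rightarrow> bool" where
  "has_cdim S N \<longleftrightarrow> (\<exists>B. finite B \<and> card B = N \<and> cindependent B \<and> cspan B = S)"

definition num_range :: "('a::chilbert \<Rightarrow> 'a) \<Rightarrow> complex set" where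
  "num_range T = {cinner (T x) x | x. norm x = 1}"

text \<open>Unitary \<open>N\<close>-dilations of \<open>T\<close> to \<open>\<H> \<oplus> E\<close> (with \<open>E = \<complex>^N\<close> in the application):
unitaries \<open>U\<close> on \<open>\<H> \<times> E\<close> with \<open>P_\<H> U|_\<H> = T\<close>.\<close>
definition unitary_dilations :: "('a::chilbert \<Rightarrow> 'a) \<Rightarrow> (('a \<times> 'e::chilbert) \<Rightarrow> ('a \<times> 'e)) set" where
  "unitary_dilations T = {U. unitary_op U \<and> (\<forall>x. fst (U (x, 0)) = T x)}"

definition open_halfplane :: "complex set \<Rightarrow> bool" where
  "open_halfplane P \<longleftrightarrow> (\<exists>a b. a \<noteq> 0 \<and> P = {z. Re (a * z) < b})"

definition wraps :: "('y \<Rightarrow> complex set) \<Rightarrow> 'y set \<Rightarrow> complex set \<Rightarrow> bool" where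
  "wraps \<tau> Y A \<longleftrightarrow> (\<forall>P. open_halfplane P \<and> A \<subseteq> P \<longrightarrow> (\<exists>y\<in>Y. \<tau> y \<subseteq> P))"

end

theory Submission imports Defs begin

lemma parallelogram_aux:
  fixes x a b :: "'a::real_inner"
  shows "(norm (a - b))\<^sup>2 = 2 * (norm (x - a))\<^sup>2 + 2 * (norm (x - b))\<^sup>2 - 4 * (norm (x - (1/2) *\<^sub>R (a + b)))\<^sup>2"
  by (simp add: power2_norm_eq_inner inner_diff_left inner_diff_right inner_add_left inner_add_right inner_commute algebra_simps)

lemma hilbert_projection:
  fixes M :: "'a::{real_inner,complete_space} set"
  assumes cl: "closed M" and sub: "subspace M"
  shows "\<exists>p\<in>M. \<forall>m\<in>M. inner (x - p) m = 0"
proof -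
  define d where "d = Inf ((\<lambda>m. (norm (x - m))\<^sup>2) ` M)"
  have M0: "0 \<in> M" using sub by (simp add: subspace_0)
  have bdd: "bdd_below ((\<lambda>m. (norm (x - m))\<^sup>2) ` M)" by (rule bdd_belowI[of _ 0]) auto
  have dle: "d \<le> (norm (x - m))\<^sup>2" if "m \<in> M" for m
    unfolding d_def using bdd that by (auto intro: cInf_lower)
  have ex: "\<exists>m\<in>M. (norm (x - m))\<^sup>2 < d + e" if "e > 0" for e
  proof -
    have "Inf ((\<lambda>m. (norm (x - m))\<^sup>2) ` M) < d + e" using that d_def by simp
    then show ?thesis using M0 by (subst (asm) cInf_less_iff[OF _ bdd]) auto
  qed
  have "\<forall>n. \<exists>m\<in>M. (norm (x - m))\<^sup>2 < d + 1 / real (Suc n)"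
    using ex by simp
  then obtain s where sM: "\<And>n. s n \<in> M" and sd: "\<And>n. (norm (x - s n))\<^sup>2 < d + 1 / real (Suc n)"
    by metis
  have close: "(norm (s i - s j))\<^sup>2 \<le> 2 / real (Suc i) + 2 / real (Suc j)" for i j
  proof -
    have "(1/2) *\<^sub>R (s i + s j) \<in> M" using sM sub by (simp add: subspace_add subspace_scale)
    then have "d \<le> (norm (x - (1/2) *\<^sub>R (s i + s j)))\<^sup>2" by (rule dle)
    then show ?thesis using parallelogram_aux[of "s i" "s j" x] sd[of i] sd[of j] by linarith
  qed
  have "Cauchy s"
  proof (rule metric_CauchyI)
    fix e :: real assume e: "e > 0"
    obtain N where N: "4 / e\<^sup>2 < real N" using reals_Archimedean2 by blast
    have e2: "e\<^sup>2 > 0" using e by simp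
    have "4 < e\<^sup>2 * real N" using N e2 by (simp add: divide_less_eq mult.commute)
    also have "\<dots> \<le> e\<^sup>2 * real (Suc N)" using e2 by simp
    finally have "4 / real (Suc N) < e\<^sup>2" by (simp add: divide_less_eq)
    show "\<exists>M. \<forall>m\<ge>M. \<forall>n\<ge>M. dist (s m) (s n) < e"
    proof (intro exI allI impI)
      fix i j assume i: "N \<le> i" and j: "N \<le> j"
      have "2 / real (Suc i) \<le> 2 / real (Suc N)" using i by (simp add: frac_le)
      moreover have "2 / real (Suc j) \<le> 2 / real (Suc N)" using j by (simp add: frac_le)
      ultimately have "(dist (s i) (s j))\<^sup>2 < e\<^sup>2" using close[of i j] \<open>4 / real (Suc N) < e\<^sup>2\<close>
        by (simp add: dist_norm)
      then show "dist (s i) (s j) < e" using e by (simp add: power_less_imp_less_base)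
    qed
  qed
  then obtain p where lim: "s \<longlonglongrightarrow> p" using convergent_eq_Cauchy by (auto simp: convergent_def)
  have pM: "p \<in> M" using cl sM lim closed_sequentially by blast
  have lim2: "(\<lambda>n. (norm (x - s n))\<^sup>2) \<longlonglongrightarrow> (norm (x - p))\<^sup>2"
    by (intro tendsto_intros lim)
  have lim3: "(\<lambda>n. d + 1 / real (Suc n)) \<longlonglongrightarrow> d"
  proof -
    have "(\<lambda>n. 1 / (1 + real n)) \<longlonglongrightarrow> 0"
      using LIMSEQ_Suc[OF lim_inverse_n'] by (simp add: inverse_eq_divide)
    from tendsto_add[OF tendsto_const[of d] this] show ?thesis by simp
  qed
  have pd: "(norm (x - p))\<^sup>2 \<le> d"
    by (rule LIMSEQ_le[OF lim2 lim3]) (use sd in \<open>auto intro: less_imp_le\<close>)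
  show ?thesis
  proof (intro bexI[OF _ pM] ballI)
    fix m assume mM: "m \<in> M"
    define c where "c = inner (x - p) m"
    define k where "k = (norm m)\<^sup>2"
    have key: "2 * t * c \<le> t\<^sup>2 * k" for t
    proof -
      have "p + t *\<^sub>R m \<in> M" using pM mM sub by (simp add: subspace_add subspace_scale)
      then have "(norm (x - p))\<^sup>2 \<le> (norm (x - (p + t *\<^sub>R m)))\<^sup>2" using dle pd order_trans by blast
      also have "\<dots> = (norm (x - p))\<^sup>2 - 2 * t * c + t\<^sup>2 * k"
        unfolding c_def k_def power2_norm_eq_inner
        by (simp add: inner_diff_left inner_diff_right inner_add_left inner_add_right inner_commute algebra_simps power2_eq_square)
      finally show ?thesis by simp
    qed
    have k0: "k \<ge> 0" by (simp add: k_def)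
    have "2 * (c / (k+1)) * c \<le> (c/(k+1))\<^sup>2 * k" by (rule key)
    then have h: "2 * (c / (k+1)) * c * (k+1)\<^sup>2 \<le> (c/(k+1))\<^sup>2 * k * (k+1)\<^sup>2"
      by (rule mult_right_mono) simp
    have kk: "k + 1 \<noteq> 0" using k0 by simp
    have e1: "2 * (c / (k+1)) * c * (k+1)\<^sup>2 = 2 * c\<^sup>2 * (k+1)"
      using kk by (simp add: power2_eq_square)
    have e2: "(c/(k+1))\<^sup>2 * k * (k+1)\<^sup>2 = c\<^sup>2 * k"
      using kk by (simp add: power2_eq_square)
    have "2 * c\<^sup>2 * (k+1) \<le> c\<^sup>2 * k" using h e1 e2 by simp
    then have "c\<^sup>2 * (k + 2) \<le> 0" by (simp add: algebra_simps)
    moreover have "c\<^sup>2 * 2 \<le> c\<^sup>2 * (k + 2)" using k0 by (intro mult_left_mono) simp_all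
    ultimately have "c\<^sup>2 \<le> 0" by linarith
    then show "inner (x - p) m = 0" unfolding c_def by simp
  qed
qed


lemma riesz:
  fixes f :: "'a::{real_inner,complete_space} \<Rightarrow> real"
  assumes bl: "bounded_linear f"
  shows "\<exists>z. \<forall>x. f x = inner x z"
proof (cases "\<forall>x. f x = 0")
  case True then show ?thesis by (intro exI[of _ 0]) simp
next
  case False
  then obtain y where fy: "f y \<noteq> 0" by blast
  interpret f: bounded_linear f by (rule bl)
  define M where "M = {x. f x = 0}"
  have clM: "closed M" unfolding M_def
    by (intro closed_Collect_eq continuous_intros f.continuous_on)
  have subM: "subspace M" unfolding M_def subspace_def
    by (auto simp: f.add f.scale f.zero)
  obtain p where pM: "p \<in> M" and orth: "\<And>m. m \<in> M \<Longrightarrow> inner (y - p) m = 0"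
    using hilbert_projection[OF clM subM, of y] by blast
  define w where "w = y - p"
  have fw: "f w = f y" using pM by (simp add: w_def M_def f.diff)
  have w0: "w \<noteq> 0" using fw fy f.zero by auto
  have ww: "inner w w \<noteq> 0" using w0 by simp
  show ?thesis
  proof (intro exI allI)
    fix x
    have "x - (f x / f w) *\<^sub>R w \<in> M" using fw fy by (simp add: M_def f.diff f.scale)
    then have "inner w (x - (f x / f w) *\<^sub>R w) = 0" using orth w_def by blast
    then have "inner w x = (f x / f w) * inner w w" by (simp add: inner_diff_right)
    then show "f x = inner x ((f w / inner w w) *\<^sub>R w)"
      using ww fw fy by (simp add: inner_commute field_simps)
  qed
qed

lemma iunit_swap: "inner (a::'a::chilbert) (iunit b) = - inner (iunit a) b"
proof -
  have "inner a (iunit b) = inner (iunit a) (iunit (iunit b))" by (simp add: inner_iunit)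
  also have "\<dots> = - inner (iunit a) b" by (simp add: iunit_iunit)
  finally show ?thesis .
qed

lemma adj_exists:
  fixes T :: "'a::chilbert \<Rightarrow> 'b::chilbert"
  assumes "bounded_clinear_op T"
  shows "\<exists>S. \<forall>x y. cinner (T x) y = cinner x (S y)"
proof -
  have blT: "bounded_linear T" and ci: "\<And>x. T (iunit x) = iunit (T x)"
    using assms by (auto simp: bounded_clinear_op_def)
  have "\<forall>y. \<exists>z. \<forall>x. inner (T x) y = inner x z"
  proof
    fix y
    have "bounded_linear (\<lambda>x. inner (T x) y)"
      using bounded_linear_compose[OF bounded_linear_inner_left blT] by simp
    then show "\<exists>z. \<forall>x. inner (T x) y = inner x z" by (rule riesz)
  qed
  then obtain S where S: "\<And>x y. inner (T x) y = inner x (S y)" by metis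
  show ?thesis
  proof (intro exI allI)
    fix x y
    have "inner x (iunit (S y)) = - inner (iunit x) (S y)" by (rule iunit_swap)
    also have "\<dots> = - inner (T (iunit x)) y" by (simp add: S)
    also have "\<dots> = inner (T x) (iunit y)" by (simp add: ci iunit_swap)
    finally show "cinner (T x) y = cinner x (S y)"
      by (simp add: cinner_def S)
  qed
qed

lemma adj_unique:
  fixes T :: "'a::chilbert \<Rightarrow> 'b::chilbert"
  assumes "\<forall>x y. cinner (T x) y = cinner x (S y)" "\<forall>x y. cinner (T x) y = cinner x (S' y)"
  shows "S = S'"
proof
  fix y
  have "\<And>x. inner x (S y) = inner x (S' y)"
  proof -
    fix x
    have "cinner x (S y) = cinner x (S' y)" using assms by metis
    then show "inner x (S y) = inner x (S' y)" by (simp add: cinner_def)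
  qed
  from this[of "S y - S' y"] have "inner (S y - S' y) (S y - S' y) = 0"
    by (simp only: inner_diff_right)
  then show "S y = S' y" by simp
qed

lemma cadjoint_eq:
  fixes T :: "'a::chilbert \<Rightarrow> 'b::chilbert"
  assumes "\<forall>x y. cinner (T x) y = cinner x (S y)"
  shows "cadjoint T = S"
  unfolding cadjoint_def
  by (rule the_equality) (use assms adj_unique in blast)+

lemma cadjoint_prop:
  fixes T :: "'a::chilbert \<Rightarrow> 'b::chilbert"
  assumes "bounded_clinear_op T"
  shows "cinner (T x) y = cinner x (cadjoint T y)"
proof -
  obtain S where S: "\<forall>x y. cinner (T x) y = cinner x (S y)" using adj_exists[OF assms] by blast
  then show ?thesis using cadjoint_eq[OF S] by simp
qed

lemma cinner_prod: "cinner (a, b) (c, d) = cinner a c + cinner b d"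
  by (simp add: cinner_def inner_prod_def iunit_prod_def complex_eq_iff)

lemma cinner_zero [simp]: "cinner 0 x = 0" "cinner x 0 = 0"
proof -
  show "cinner 0 x = 0" by (simp add: cinner_def complex_eq_iff)
  have "iunit (0::'a) = 0" using iunit_scaleR[of 0 "0::'a"] by simp
  then show "cinner x (0::'a::chilbert) = 0" by (simp add: cinner_def complex_eq_iff)
qed

lemma cinner_scaleR: "cinner (r *\<^sub>R x) (r *\<^sub>R y) = of_real (r * r) * cinner x y"
  by (simp add: cinner_def iunit_scaleR complex_eq_iff)


definition comb :: "('h::chilbert \<times> 'e::chilbert \<Rightarrow> 'h \<times> 'e) \<Rightarrow> ('k::chilbert \<Rightarrow> 'k) \<Rightarrow> ('h \<times> 'k) \<times> 'e \<Rightarrow> ('h \<times> 'k) \<times> 'e" where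
  "comb A B z = ((fst (A (fst (fst z), snd z)), B (snd (fst z))), snd (A (fst (fst z), snd z)))"

lemma comb_simp [simp]: "comb A B ((x1, x2), e) = ((fst (A (x1, e)), B x2), snd (A (x1, e)))"
  by (simp add: comb_def)

lemma comb_comp: "comb A B \<circ> comb C D = comb (A \<circ> C) (B \<circ> D)"
  by (rule ext) (simp add: comb_def)

lemma comb_id: "comb id id = id"
  by (rule ext) (simp add: comb_def)

lemma iunit_zero: "iunit (0::'a::chilbert) = 0"
  using iunit_scaleR[of 0 "0::'a"] by simp

lemma comb_bclin:
  fixes A :: "'h::chilbert \<times> 'e::chilbert \<Rightarrow> 'h \<times> 'e" and B :: "'k::chilbert \<Rightarrow> 'k"
  assumes A: "bounded_clinear_op A" and B: "bounded_clinear_op B"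
  shows "bounded_clinear_op (comb A B)"
proof -
  have bA: "bounded_linear A" and cA: "\<And>x. A (iunit x) = iunit (A x)"
    and bB: "bounded_linear B" and cB: "\<And>x. B (iunit x) = iunit (B x)"
    using A B by (auto simp: bounded_clinear_op_def)
  have l1: "bounded_linear (\<lambda>z::('h \<times> 'k) \<times> 'e. (fst (fst z), snd z))"
    by (intro bounded_linear_Pair bounded_linear_compose[OF bounded_linear_fst bounded_linear_fst]
        bounded_linear_snd)
  have l2: "bounded_linear (\<lambda>z::('h \<times> 'k) \<times> 'e. A (fst (fst z), snd z))"
    using bounded_linear_compose[OF bA l1] by simp
  have l3: "bounded_linear (\<lambda>z::('h \<times> 'k) \<times> 'e. B (snd (fst z)))"
    using bounded_linear_compose[OF bB bounded_linear_compose[OF bounded_linear_snd bounded_linear_fst]] by simp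
  have "bounded_linear (\<lambda>z::('h \<times> 'k) \<times> 'e. ((fst (A (fst (fst z), snd z)), B (snd (fst z))), snd (A (fst (fst z), snd z))))"
    by (intro bounded_linear_Pair bounded_linear_compose[OF bounded_linear_fst l2]
        bounded_linear_compose[OF bounded_linear_snd l2] l3)
  then have "bounded_linear (comb A B)" by (simp add: comb_def[abs_def])
  moreover have "comb A B (iunit z) = iunit (comb A B z)" for z
  proof -
    obtain x1 x2 e where z: "z = ((x1, x2), e)" by (metis prod.collapse)
    have "A (iunit x1, iunit e) = iunit (A (x1, e))" using cA[of "(x1, e)"] by (simp add: iunit_prod_def)
    then show ?thesis using z by (simp add: iunit_prod_def cB)
  qed
  ultimately show ?thesis by (simp add: bounded_clinear_op_def)
qed

lemma comb_adj:
  fixes A A' :: "'h::chilbert \<times> 'e::chilbert \<Rightarrow> 'h \<times> 'e" and B B' :: "'k::chilbert \<Rightarrow> 'k"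
  assumes A: "\<forall>x y. cinner (A x) y = cinner x (A' y)" and B: "\<forall>x y. cinner (B x) y = cinner x (B' y)"
  shows "\<forall>x y. cinner (comb A B x) y = cinner x (comb A' B' y)"
proof (intro allI)
  fix z w :: "('h \<times> 'k) \<times> 'e"
  obtain x1 x2 e where z: "z = ((x1, x2), e)" by (metis prod.collapse)
  obtain y1 y2 f where w: "w = ((y1, y2), f)" by (metis prod.collapse)
  have "cinner (A (x1, e)) (y1, f) = cinner (x1, e) (A' (y1, f))" using A by blast
  then have h: "cinner (fst (A (x1, e))) y1 + cinner (snd (A (x1, e))) f
      = cinner x1 (fst (A' (y1, f))) + cinner e (snd (A' (y1, f)))"
    by (metis cinner_prod prod.collapse)
  have "cinner (B x2) y2 = cinner x2 (B' y2)" using B by blast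
  then show "cinner (comb A B z) w = cinner z (comb A' B' w)"
    using h z w by (simp add: cinner_prod algebra_simps)
qed

lemma comb_unitary:
  assumes U: "unitary_op U" and V: "unitary_op V"
  shows "unitary_op (comb U V)"
proof -
  have bU: "bounded_clinear_op U" and bV: "bounded_clinear_op V"
    using U V by (auto simp: unitary_op_def)
  have aU: "\<forall>x y. cinner (U x) y = cinner x (cadjoint U y)" using cadjoint_prop[OF bU] by blast
  have aV: "\<forall>x y. cinner (V x) y = cinner x (cadjoint V y)" using cadjoint_prop[OF bV] by blast
  have ad: "cadjoint (comb U V) = comb (cadjoint U) (cadjoint V)"
    by (rule cadjoint_eq[OF comb_adj[OF aU aV]])
  show ?thesis
    using U V comb_bclin[OF bU bV]
    by (simp add: unitary_op_def ad comb_comp comb_id)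
qed

lemma norm_pair_sq: "(norm (a, b))\<^sup>2 = (norm a)\<^sup>2 + (norm b)\<^sup>2"
  by (simp add: norm_Pair)

lemma nr_bound:
  fixes A :: "'a::chilbert \<Rightarrow> 'a"
  assumes bl: "bounded_linear A"
    and hb: "\<And>x. norm x = 1 \<Longrightarrow> Re (a * cinner (A x) x) \<le> c"
  shows "Re (a * cinner (A x) x) \<le> c * (norm x)\<^sup>2"
proof (cases "x = 0")
  case True
  then show ?thesis using linear_0[OF bounded_linear.linear[OF bl]] by simp
next
  case False
  define u where "u = (1 / norm x) *\<^sub>R x"
  have nu: "norm u = 1" using False by (simp add: u_def)
  have xu: "x = norm x *\<^sub>R u" using False by (simp add: u_def)
  have "A x = norm x *\<^sub>R A u" by (subst xu) (simp add: linear_cmul[OF bounded_linear.linear[OF bl]])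
  then have "cinner (A x) x = of_real (norm x * norm x) * cinner (A u) u"
    using cinner_scaleR[of "norm x" "A u" u] xu by metis
  then have "Re (a * cinner (A x) x) = (norm x * norm x) * Re (a * cinner (A u) u)"
    by (simp add: algebra_simps)
  also have "\<dots> \<le> (norm x * norm x) * c" using hb[OF nu] by (intro mult_left_mono) simp_all
  finally show ?thesis by (simp add: power2_eq_square algebra_simps)
qed

lemma norm_iunit: "norm (iunit x) = norm (x::'a::chilbert)"
  by (simp add: norm_eq_sqrt_inner inner_iunit)

lemma norm_cinner_le: "norm (cinner x y) \<le> 2 * (norm x * norm (y::'a::chilbert))"
proof -
  have "norm (cinner x y) \<le> \<bar>inner x y\<bar> + \<bar>inner x (iunit y)\<bar>"
    using cmod_le[of "cinner x y"] by (simp add: cinner_def)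
  also have "\<dots> \<le> norm x * norm y + norm x * norm (iunit y)"
    by (intro add_mono Cauchy_Schwarz_ineq2)
  finally show ?thesis by (simp add: norm_iunit)
qed

lemma nr_bounded:
  fixes A :: "'a::chilbert \<Rightarrow> 'a"
  assumes bl: "bounded_linear A"
  shows "bounded (num_range A)"
proof -
  obtain K where K: "\<And>x. norm (A x) \<le> norm x * K" "K > 0"
    using bounded_linear.pos_bounded[OF bl] by blast
  have "norm w \<le> 2 * K" if wA: "w \<in> num_range A" for w
  proof -
    obtain x where w: "w = cinner (A x) x" and nx: "norm x = 1"
      using wA unfolding num_range_def by blast
    have "norm w \<le> 2 * (norm (A x) * norm x)" using w norm_cinner_le by simp
    also have "\<dots> \<le> 2 * K" using K(1)[of x] nx by simp
    finally show ?thesis .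
  qed
  then show ?thesis by (auto simp: bounded_iff)
qed

lemma halfplane_margin:
  assumes K: "compact K" and sub: "K \<subseteq> {z. Re (a * z) < b}"
  shows "\<exists>c<b. \<forall>z\<in>K. Re (a * z) \<le> c"
proof (cases "K = {}")
  case True then show ?thesis by (intro exI[of _ "b - 1"]) auto
next
  case False
  have "compact ((\<lambda>z. Re (a * z)) ` K)"
    by (intro compact_continuous_image K continuous_intros)
  then obtain m where "m \<in> (\<lambda>z. Re (a * z)) ` K" "\<forall>y\<in>(\<lambda>z. Re (a * z)) ` K. y \<le> m"
    using compact_attains_sup False by blast
  then show ?thesis using sub by (intro exI[of _ m]) auto
qed


theorem lemma6p1:
  fixes T :: "'h::chilbert \<Rightarrow> 'h" and V :: "'k::chilbert \<Rightarrow> 'k" and N :: nat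
  assumes "contraction T"
    and "N = CARD('n::finite)"
    and "has_cdim (defect_space T) N"
    and "has_cdim (defect_space_adj T) N"
    and "unitary_op V"
    and "wraps (\<lambda>U. closure (num_range U))
           (unitary_dilations T :: ('h \<times> (complex ^ 'n) \<Rightarrow> 'h \<times> (complex ^ 'n)) set)
           (closure (num_range T))"
  shows "wraps (\<lambda>U. closure (num_range U))
           (unitary_dilations (map_prod T V) :: (('h \<times> 'k) \<times> (complex ^ 'n) \<Rightarrow> ('h \<times> 'k) \<times> (complex ^ 'n)) set)
           (closure (num_range (map_prod T V)))"
  unfolding wraps_def
proof (intro allI impI)
  fix P assume hP: "open_halfplane P \<and> closure (num_range (map_prod T V)) \<subseteq> P"
  then obtain a b where P: "P = {z. Re (a * z) < b}" unfolding open_halfplane_def by blast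
  have clT: "bounded_clinear_op T" using assms(1) by (simp add: contraction_def)
  have blT: "bounded_linear T" using clT by (simp add: bounded_clinear_op_def)
  have T0: "T 0 = 0" using linear_0[OF bounded_linear.linear[OF blT]] .
  have clV: "bounded_clinear_op V" using assms(5) by (simp add: unitary_op_def)
  have blV: "bounded_linear V" using clV by (simp add: bounded_clinear_op_def)
  have V0: "V 0 = 0" using linear_0[OF bounded_linear.linear[OF blV]] .
  have blT1: "bounded_linear (map_prod T V)"
  proof -
    have "bounded_linear (\<lambda>z::'h \<times> 'k. (T (fst z), V (snd z)))"
      by (intro bounded_linear_Pair bounded_linear_compose[OF blT bounded_linear_fst]
          bounded_linear_compose[OF blV bounded_linear_snd])
    moreover have "map_prod T V = (\<lambda>z::'h \<times> 'k. (T (fst z), V (snd z)))"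
      by (rule ext) (simp add: map_prod_def split_beta)
    ultimately show ?thesis by simp
  qed
  have T1sub: "closure (num_range (map_prod T V)) \<subseteq> P" using hP by blast
  have TinT1: "num_range T \<subseteq> num_range (map_prod T V)"
  proof
    fix w assume "w \<in> num_range T"
    then obtain x where w: "w = cinner (T x) x" and nx: "norm x = 1" unfolding num_range_def by blast
    have "cinner (map_prod T V (x, 0)) (x, 0) = w" using w V0 by (simp add: cinner_prod)
    moreover have "norm (x, 0::'k) = 1" using nx by (simp add: norm_Pair)
    ultimately show "w \<in> num_range (map_prod T V)" unfolding num_range_def by blast
  qed
  have VinT1: "cinner (V x) x \<in> num_range (map_prod T V)" if nx: "norm x = 1" for x
  proof -
    have e: "cinner (V x) x = cinner (map_prod T V (0, x)) (0, x)" using T0 by (simp add: cinner_prod)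
    have n: "norm (0::'h, x) = 1" using nx by (simp add: norm_Pair)
    show ?thesis unfolding num_range_def
      by (rule CollectI, rule exI[of _ "(0::'h, x)"]) (use e n in simp)
  qed
  have "closure (num_range T) \<subseteq> P"
    using closure_mono[OF TinT1] T1sub by blast
  then obtain U where U: "U \<in> (unitary_dilations T :: ('h \<times> (complex ^ 'n) \<Rightarrow> 'h \<times> (complex ^ 'n)) set)"
      and UP: "closure (num_range U) \<subseteq> P"
    using assms(6) hP unfolding wraps_def by blast
  have uU: "unitary_op U" and dU: "\<And>x. fst (U (x, 0)) = T x" using U by (auto simp: unitary_dilations_def)
  have clU: "bounded_clinear_op U" using uU by (simp add: unitary_op_def)
  have blU: "bounded_linear U" using clU by (simp add: bounded_clinear_op_def)
  obtain c1 where c1: "c1 < b" "\<forall>z\<in>closure (num_range U). Re (a * z) \<le> c1"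
    using halfplane_margin[of "closure (num_range U)" a b] UP P
      compact_closure[THEN iffD2, OF nr_bounded[OF blU]] by blast
  obtain c2 where c2: "c2 < b" "\<forall>z\<in>closure (num_range (map_prod T V)). Re (a * z) \<le> c2"
    using halfplane_margin[of "closure (num_range (map_prod T V))" a b] T1sub P
      compact_closure[THEN iffD2, OF nr_bounded[OF blT1]] by blast
  define c where "c = max c1 c2"
  have cb: "c < b" using c1 c2 by (simp add: c_def)
  have bdU: "Re (a * cinner (U x) x) \<le> c * (norm x)\<^sup>2" for x
  proof (rule nr_bound[OF blU])
    fix y :: "'h \<times> (complex ^ 'n)" assume ny: "norm y = 1"
    have "cinner (U y) y \<in> num_range U" unfolding num_range_def
      by (rule CollectI, rule exI[of _ y]) (use ny in simp)
    then have "cinner (U y) y \<in> closure (num_range U)"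
      by (rule closure_subset[THEN subsetD])
    then have "Re (a * cinner (U y) y) \<le> c1" using c1(2) by blast
    moreover have "c1 \<le> c" by (simp add: c_def)
    ultimately show "Re (a * cinner (U y) y) \<le> c" by linarith
  qed
  have bdV: "Re (a * cinner (V x) x) \<le> c * (norm x)\<^sup>2" for x
  proof (rule nr_bound[OF blV])
    fix y :: 'k assume "norm y = 1"
    then have "cinner (V y) y \<in> num_range (map_prod T V)" by (rule VinT1)
    then have "cinner (V y) y \<in> closure (num_range (map_prod T V))"
      by (rule closure_subset[THEN subsetD])
    then have "Re (a * cinner (V y) y) \<le> c2" using c2(2) by blast
    moreover have "c2 \<le> c" by (simp add: c_def)
    ultimately show "Re (a * cinner (V y) y) \<le> c" by linarith
  qed
  define U1 where "U1 = comb U V"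
  have U1dil: "U1 \<in> (unitary_dilations (map_prod T V) :: (('h \<times> 'k) \<times> (complex ^ 'n) \<Rightarrow> ('h \<times> 'k) \<times> (complex ^ 'n)) set)"
    unfolding unitary_dilations_def U1_def
  proof (intro CollectI conjI allI)
    show "unitary_op (comb U V)" by (rule comb_unitary[OF uU assms(5)])
    fix x :: "'h \<times> 'k"
    show "fst (comb U V (x, 0)) = map_prod T V x"
      by (cases x) (simp add: dU)
  qed
  have nrU1: "num_range U1 \<subseteq> {z. Re (a * z) \<le> c}"
  proof
    fix w assume "w \<in> num_range U1"
    then obtain z where w: "w = cinner (U1 z) z" and nz: "norm z = 1" unfolding num_range_def by blast
    obtain x1 x2 e where z: "z = ((x1, x2), e)" by (metis prod.collapse)
    have "cinner (U1 z) z = cinner (U (x1, e)) (x1, e) + cinner (V x2) x2"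
      unfolding U1_def z by (simp add: cinner_prod) (metis cinner_prod prod.collapse)
    then have "Re (a * w) = Re (a * cinner (U (x1, e)) (x1, e)) + Re (a * cinner (V x2) x2)"
      using w by (simp add: algebra_simps)
    also have "\<dots> \<le> c * (norm (x1, e))\<^sup>2 + c * (norm x2)\<^sup>2"
      using bdU bdV by (rule add_mono)
    also have "\<dots> = c * (norm z)\<^sup>2" using z by (simp add: norm_pair_sq algebra_simps)
    finally show "w \<in> {z. Re (a * z) \<le> c}" using nz by simp
  qed
  have "closed {z. Re (a * z) \<le> c}"
    by (intro closed_Collect_le continuous_intros)
  then have "closure (num_range U1) \<subseteq> {z. Re (a * z) \<le> c}"
    using nrU1 closure_minimal by blast
  also have "\<dots> \<subseteq> P" using cb P by auto
  finally show "\<exists>y\<in>(unitary_dilations (map_prod T V) :: (('h \<times> 'k) \<times> (complex ^ 'n) \<Rightarrow> ('h \<times> 'k) \<times> (complex ^ 'n)) set).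
      closure (num_range y) \<subseteq> P"
    using U1dil by blast
qed

end
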